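(* Let $n\ge 1$ and $k\in\{0,1,\dots,n-1\}$ be integers. Then $$B_{k}^{(-n)}=\frac{1}{n!\binom{n+k}{k}}\sum_{j=0}^{n+k-1}E(n+k,j)\binom{j}{k}.$$
   Context: The Bernoulli numbers of higher order $B_j^{(a)}$ (for integer $a$) are defined by $\sum_{j=0}^{\infty}B_{j}^{(a)}\frac{t^{j}}{j!}=\left(\frac{t}{e^{t}-1}\right)^{a}$. For $m\ge 1$ and $i=0,1,\dots,m-1$, the Eulerian numbers are $E(m,i)=\sum_{j=0}^{i}(-1)^{j}\binom{m+1}{j}(i+1-j)^{m}$. *)

theory Defs
  imports "HOL-Computational_Algebra.Formal_Power_Series"
begin

definition expm1_div_X :: "real fps" where
  "expm1_div_X = fps_shift 1 (fps_exp 1 - 1)"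

definition bernoulli_gf :: "int \<Rightarrow> real fps" where
  "bernoulli_gf a = (if a \<ge> 0 then (inverse expm1_div_X) ^ nat a
                     else expm1_div_X ^ nat (- a))"

definition higher_bernoulli :: "int \<Rightarrow> nat \<Rightarrow> real" where
  "higher_bernoulli a j = fact j * fps_nth (bernoulli_gf a) j"

definition eulerian :: "nat \<Rightarrow> nat \<Rightarrow> int" where
  "eulerian m i = (\<Sum>j=0..i. (-1) ^ j * int ((m + 1) choose j) * int (i + 1 - j) ^ m)"

end

theory Submission imports Defs begin
unbundle fps_syntax

lemma shift_decomp:
  fixes f :: "real fps"
  assumes "f $ 0 = 0"
  shows "f = fps_X * fps_shift 1 f"
  using assms by (intro fps_ext) (simp)

lemma pow_low:
  fixes f :: "real fps"
  assumes "f $ 0 = 0"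
  shows "(f ^ N) $ (N + k) = (fps_shift 1 f ^ N) $ k" and "i < N \<Longrightarrow> (f ^ N) $ i = 0"
proof -
  have "f ^ N = fps_X ^ N * fps_shift 1 f ^ N"
    by (subst shift_decomp[OF assms]) (simp only: power_mult_distrib)
  then show "(f ^ N) $ (N + k) = (fps_shift 1 f ^ N) $ k" and "i < N \<Longrightarrow> (f ^ N) $ i = 0"
    by (simp_all add: fps_X_power_mult_nth)
qed

lemma exp_binom:
  fixes a b :: real
  shows "((fps_exp a - fps_exp b) ^ N) $ m =
     (\<Sum>l\<le>N. of_nat (N choose l) * (-1)^(N-l) * (l * a + (N - l) * b) ^ m) / fact m"
proof -
  have "(fps_exp a - fps_exp b) ^ N = (fps_exp a + (- fps_exp b)) ^ N" by simp
  also have "\<dots> = (\<Sum>l\<le>N. of_nat (N choose l) * fps_exp a ^ l * (- fps_exp b) ^ (N - l))"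
    by (rule binomial_ring)
  also have "\<dots> = (\<Sum>l\<le>N. fps_const (of_nat (N choose l) * (-1)^(N-l)) * fps_exp (l * a + (N-l) * b))"
  proof (rule sum.cong[OF refl])
    fix l assume "l \<in> {..N}"
    have "(- fps_exp b) ^ (N - l) = fps_const ((-1)^(N-l)) * fps_exp b ^ (N-l)"
      proof -
      have "(-1::real fps) = fps_const (-1)" by (simp only: fps_const_neg[symmetric] fps_const_1_eq_1)
      then have "(-1::real fps)^(N-l) = fps_const ((-1)^(N-l))" by (simp only: fps_const_power)
      then show ?thesis by (subst power_minus) simp
    qed
    then show "of_nat (N choose l) * fps_exp a ^ l * (- fps_exp b) ^ (N - l) =
      fps_const (of_nat (N choose l) * (-1)^(N-l)) * fps_exp (l * a + (N-l) * b)"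
    proof -
      have e: "fps_exp a ^ l * fps_exp b ^ (N-l) = fps_exp (l * a + (N-l) * b)"
        by (simp only: fps_exp_power_mult fps_exp_add_mult)
      have c: "(of_nat (N choose l) :: real fps) = fps_const (of_nat (N choose l))"
        by (simp only: fps_of_nat)
      show ?thesis unfolding \<open>(- fps_exp b) ^ (N - l) = _\<close> c
        by (subst e[symmetric]) (simp only: fps_const_mult[symmetric] mult_ac)
    qed
  qed
  finally show ?thesis
    by (simp add: fps_sum_nth sum_divide_distrib)
qed

lemma neg_pow_fps: "(- (g::real fps)) ^ j = fps_const ((-1)^j) * g ^ j"
proof -
  have "(-1::real fps) = fps_const (-1)" by (simp only: fps_const_neg[symmetric] fps_const_1_eq_1)
  then have "(-1::real fps)^j = fps_const ((-1)^j)" by (simp only: fps_const_power)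
  then show ?thesis by (subst power_minus) simp
qed

lemma one_minus_X_pow:
  "((1 - fps_X) ^ N :: real fps) $ l = (-1)^l * real (N choose l)"
proof -
  have "(1 - fps_X :: real fps) ^ N = ((- fps_X) + 1) ^ N" by simp
  also have "\<dots> = (\<Sum>i\<le>N. of_nat (N choose i) * (- fps_X) ^ i * 1 ^ (N - i))"
    by (rule binomial_ring)
  also have "\<dots> = (\<Sum>i\<le>N. fps_const (of_nat (N choose i) * (-1)^i) * fps_X ^ i)"
    by (intro sum.cong refl) (simp add: neg_pow_fps fps_of_nat[symmetric] mult_ac)
  finally have "((1 - fps_X) ^ N :: real fps) $ l = (\<Sum>i\<le>N. (of_nat (N choose i) * (-1)^i) * (if l = i then 1 else 0))"
    by (simp add: fps_sum_nth)
  also have "\<dots> = (\<Sum>i\<le>N. if i = l then (-1)^l * real (N choose l) else 0)"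
    by (intro sum.cong refl) auto
  also have "\<dots> = (-1)^l * real (N choose l)"
    by (simp add: sum.delta binomial_eq_0 not_le)
  finally show ?thesis .
qed

lemma vanish_gen:
  fixes a b :: real
  assumes "m < N"
  shows "(\<Sum>l\<le>N. of_nat (N choose l) * (-1)^(N-l) * (l * a + (N - l) * b) ^ m) = 0"
proof -
  have "((fps_exp a - fps_exp b) ^ N) $ m = 0"
    by (rule pow_low(2)[OF _ assms]) simp
  then show ?thesis by (simp add: exp_binom)
qed

lemma vanish:
  fixes c :: real
  assumes "m < N"
  shows "(\<Sum>l\<le>N. (-1)^l * of_nat (N choose l) * (c - real l) ^ m) = 0"
proof -
  have N: "N > 0" using assms by simp
  define b where "b = c / N"
  define a where "a = b - 1"
  have "(-1)^N * (\<Sum>l\<le>N. of_nat (N choose l) * (-1)^(N-l) * (l * a + (N - l) * b) ^ m) = 0"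
    using vanish_gen[OF assms] by simp
  moreover have "(-1)^N * (\<Sum>l\<le>N. of_nat (N choose l) * (-1)^(N-l) * (l * a + (N - l) * b) ^ m)
     = (\<Sum>l\<le>N. (-1)^l * of_nat (N choose l) * (c - real l) ^ m)"
    unfolding sum_distrib_left
  proof (intro sum.cong refl)
    fix l assume "l \<in> {..N}"
    then have lN: "l \<le> N" by simp
    have s: "(-1::real)^N * (-1)^(N-l) = (-1)^l"
    proof -
      have h: "(-1::real)^N = (-1)^(N-l) * (-1)^l" using lN by (simp add: power_add[symmetric])
      have sq: "((-1::real)^(N-l))^2 = 1" by (simp flip: power_mult)
      have "(-1::real)^N * (-1)^(N-l) = ((-1)^(N-l))^2 * (-1)^l"
        unfolding h by (simp add: power2_eq_square mult_ac)
      then show ?thesis using sq by simp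
    qed
    have v: "l * a + (N - l) * b = c - real l"
      using lN N by (simp add: a_def b_def of_nat_diff field_simps)
    show "(-1)^N * (of_nat (N choose l) * (-1)^(N-l) * (l * a + (N - l) * b) ^ m) =
          (-1)^l * of_nat (N choose l) * (c - real l) ^ m"
      unfolding v using s by (simp add: mult_ac)
  qed
  ultimately show ?thesis by simp
qed

lemma neg1_diff: "i \<le> M \<Longrightarrow> (-1::real)^(M-i) = (-1)^M * (-1)^i"
proof -
  assume lN: "i \<le> M"
  have h: "(-1::real)^M = (-1)^(M-i) * (-1)^i" using lN by (simp add: power_add[symmetric])
  have sq: "((-1::real)^i)^2 = 1" by (simp flip: power_mult)
  have "(-1::real)^M * (-1)^i = (-1)^(M-i) * ((-1)^i)^2"
    unfolding h by (simp add: power2_eq_square mult_ac)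
  then show ?thesis using sq by simp
qed

definition ee :: "nat \<Rightarrow> nat \<Rightarrow> real" where
  "ee m j = (\<Sum>l=0..j. (-1)^l * real ((m+1) choose l) * (real (j+1) - real l)^m)"

lemma eulerian_ee: "real_of_int (eulerian m j) = ee m j"
  unfolding eulerian_def ee_def of_int_sum
  by (intro sum.cong refl) (auto simp: of_nat_diff)

lemma ee_sym:
  assumes m: "m \<ge> 1" and j: "j \<le> m - 1"
  shows "ee m j = ee m (m - 1 - j)"
proof -
  define g where "g l = (-1)^l * real ((m+1) choose l) * (real (j+1) - real l)^m" for l
  have V: "sum g {0..m+1} = 0"
    using vanish[of m "m+1" "real (j+1)"] by (simp add: g_def atLeast0AtMost)
  have split: "{0..m+1} = {0..j} \<union> {j+1..m+1}" using j by auto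
  have "sum g {0..m+1} = sum g {0..j} + sum g {j+1..m+1}"
    unfolding split by (rule sum.union_disjoint) auto
  moreover have "sum g {0..j} = ee m j" by (simp add: g_def ee_def)
  moreover have "sum g {j+1..m+1} = sum (\<lambda>i. g (m+1-i)) {0..m-j}"
    by (rule sum.reindex_bij_witness[where i="\<lambda>i. m+1-i" and j="\<lambda>i. m+1-i"]) (use j m in auto)
  moreover have "sum (\<lambda>i. g (m+1-i)) {0..m-j} =
      - sum (\<lambda>i. (-1)^i * real ((m+1) choose i) * (real (m-j) - real i)^m) {0..m-j}"
    unfolding sum_negf[symmetric]
  proof (intro sum.cong refl)
    fix i assume "i \<in> {0..m-j}"
    then have i: "i \<le> m - j" by simp
    have c: "(m+1) choose (m+1-i) = (m+1) choose i" using i j by (intro binomial_symmetric[symmetric]) auto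
    have r: "real (j+1) - real (m+1-i) = - (real (m-j) - real i)" using i j m by (simp add: of_nat_diff)
    have s: "(-1::real)^(m+1-i) = (-1)^(m+1) * (-1)^i" using i j by (intro neg1_diff) auto
    have "g (m+1-i) = (-1)^(m+1) * (-1)^i * real ((m+1) choose i) * ((-1)^m * (real (m-j) - real i)^m)"
      unfolding g_def c r s power_minus[of "real (m-j) - real i"] by simp
    also have "\<dots> = - ((-1)^i * real ((m+1) choose i) * (real (m-j) - real i)^m)"
      by (simp add: mult_ac)
    finally show "g (m+1-i) = - ((-1)^i * real ((m+1) choose i) * (real (m-j) - real i)^m)" .
  qed
  moreover have "sum (\<lambda>i. (-1)^i * real ((m+1) choose i) * (real (m-j) - real i)^m) {0..m-j} = ee m (m-1-j)"
  proof -
    have mj: "m - j = Suc (m - 1 - j)" using j m by simp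
    show ?thesis unfolding mj sum.atLeast0_atMost_Suc ee_def using m j
      by (auto simp: of_nat_diff intro!: sum.cong)
  qed
  ultimately show ?thesis using V by linarith
qed

definition AA :: "nat \<Rightarrow> real fps" where
  "AA k = Abs_fps (\<lambda>i. real ((i + k) choose k))"

lemma times_one_minus_X_nth:
  "((f :: real fps) * (1 - fps_X)) $ i = f $ i - (if i = 0 then 0 else f $ (i - 1))"
proof -
  have "f * (1 - fps_X) = f - fps_X * f" by (simp add: algebra_simps)
  then show ?thesis by simp
qed

lemma AA_step: "AA (Suc k) * (1 - fps_X) = AA k"
proof (rule fps_ext)
  fix i show "(AA (Suc k) * (1 - fps_X)) $ i = AA k $ i"
  proof (cases i)
    case 0 then show ?thesis by (simp add: times_one_minus_X_nth AA_def)
  next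
    case (Suc i')
    have "((i' + 1 + k + 1) choose (k + 1)) = ((i' + 1 + k) choose k) + ((i' + 1 + k) choose (k+1))"
      by simp
    then show ?thesis using Suc by (simp add: times_one_minus_X_nth AA_def)
  qed
qed

lemma AA_0: "AA 0 * (1 - fps_X) = 1"
  by (rule fps_ext) (simp add: times_one_minus_X_nth AA_def)

lemma AA_inv: "AA k * (1 - fps_X) ^ (k + 1) = 1"
proof (induction k)
  case 0 then show ?case using AA_0 by simp
next
  case (Suc k)
  have "AA (Suc k) * (1 - fps_X) ^ (Suc k + 1) = (AA (Suc k) * (1 - fps_X)) * (1 - fps_X) ^ (k + 1)"
    by (simp add: mult_ac)
  also have "\<dots> = 1" using Suc by (simp add: AA_step)
  finally show ?case .
qed

theorem mainTheorem4:
  fixes n k :: nat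
  assumes "n \<ge> 1" and "k < n"
  shows "higher_bernoulli (- int n) k =
    1 / (fact n * of_nat ((n + k) choose k)) *
    (\<Sum>j=0..n+k-1. of_int (eulerian (n + k) j) * of_nat (j choose k))"
proof -
  define m where "m = n + k"
  have m1: "m \<ge> 1" using assms by (simp add: m_def)
  define D0 where "D0 = (\<Sum>l\<le>n. of_nat (n choose l) * (-1)^(n-l) * (real l) ^ m)"
  define T where "T = (\<Sum>j=0..m-1. ee m j * real (j choose k))"
  have bg: "bernoulli_gf (- int n) = expm1_div_X ^ n" using assms by (simp add: bernoulli_gf_def)
  have f0: "(fps_exp 1 - fps_exp 0 :: real fps) $ 0 = 0" by simp
  have "(expm1_div_X ^ n) $ k = ((fps_exp 1 - fps_exp 0) ^ n) $ m"
    unfolding expm1_div_X_def m_def using pow_low(1)[OF f0, of n k] by simp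
  also have "\<dots> = D0 / fact m"
    unfolding exp_binom D0_def by simp
  finally have LHS: "higher_bernoulli (- int n) k = fact k * D0 / fact m"
    by (simp add: higher_bernoulli_def bg)
  have RHS: "(\<Sum>j=0..n+k-1. of_int (eulerian (n + k) j) * of_nat (j choose k)) = T"
    unfolding T_def m_def by (simp add: eulerian_ee)
  define F1 where "F1 = Abs_fps (\<lambda>i. real (i+1) ^ m)"
  define P where "P = Abs_fps (ee m)"
  have PF: "P = (1 - fps_X) ^ (m+1) * F1"
  proof (rule fps_ext)
    fix j show "P $ j = ((1 - fps_X) ^ (m+1) * F1) $ j"
      unfolding P_def F1_def fps_mult_nth one_minus_X_pow ee_def
      by (auto simp: of_nat_diff algebra_simps intro!: sum.cong)
  qed
  define G where "G = (1 - fps_X) ^ n * F1"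
  have GP: "G = AA k * P"
  proof -
    have "AA k * P = (AA k * (1 - fps_X) ^ (k+1)) * G"
      unfolding PF G_def m_def by (simp add: power_add mult_ac)
    also have "\<dots> = G" by (simp only: AA_inv mult_1)
    finally show ?thesis by simp
  qed
  have n1: "n - 1 + 1 = n" using assms by simp
  have "G $ (n-1) = (\<Sum>l=0..n-1. (-1)^l * real (n choose l) * (real n - real l) ^ m)"
    unfolding G_def F1_def fps_mult_nth one_minus_X_pow using assms
    by (auto simp: of_nat_diff intro!: sum.cong)
  also have "\<dots> = D0"
  proof -
    have "D0 = (\<Sum>l=0..n. of_nat (n choose l) * (-1)^(n-l) * (real l) ^ m)"
      unfolding D0_def by (simp add: atLeast0AtMost)
    also have "\<dots> = (\<Sum>l=0..n. of_nat (n choose (n - l)) * (-1)^(n-(n-l)) * (real (n - l)) ^ m)"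
      by (subst sum.atLeastAtMost_rev) simp
    also have "\<dots> = (\<Sum>l=0..n. (-1)^l * real (n choose l) * (real n - real l) ^ m)"
      by (intro sum.cong refl) (auto simp: binomial_symmetric[symmetric] of_nat_diff)
    also have "\<dots> = (\<Sum>l=0..n-1. (-1)^l * real (n choose l) * (real n - real l) ^ m)"
    proof -
      have "n = Suc (n - 1)" using assms by simp
      then have "{0..n} = insert n {0..n-1}" by auto
      moreover have "n \<notin> {0..n-1}" using assms by auto
      ultimately show ?thesis using m1 by simp
    qed
    finally show ?thesis by simp
  qed
  finally have GD: "G $ (n-1) = D0" .
  have "G $ (n-1) = (\<Sum>j=0..n-1. real ((j + k) choose k) * ee m (n - 1 - j))"
    unfolding GP fps_mult_nth AA_def P_def by simp
  also have "\<dots> = (\<Sum>j=0..n-1. real ((j + k) choose k) * ee m (j + k))"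
  proof (intro sum.cong refl)
    fix j assume "j \<in> {0..n-1}"
    then have "j \<le> n - 1" by simp
    then have "ee m (n - 1 - j) = ee m (m - 1 - (n - 1 - j))"
      using m1 assms by (intro ee_sym) (auto simp: m_def)
    also have "m - 1 - (n - 1 - j) = j + k" using \<open>j \<le> n - 1\<close> assms by (simp add: m_def)
    finally show "real ((j + k) choose k) * ee m (n - 1 - j) = real ((j + k) choose k) * ee m (j + k)"
      by simp
  qed
  also have "\<dots> = (\<Sum>j=k..m-1. real (j choose k) * ee m j)"
  proof -
    have "m - 1 = n - 1 + k" using assms by (simp add: m_def)
    then show ?thesis
      using sum.shift_bounds_cl_nat_ivl[of "\<lambda>j. real (j choose k) * ee m j" 0 k "n-1"] by simp
  qed
  also have "\<dots> = T"
  proof -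
    have "{0..m-1} = {0..<k} \<union> {k..m-1}" using assms by (auto simp: m_def)
    then have "T = (\<Sum>j\<in>{0..<k}. ee m j * real (j choose k)) + (\<Sum>j=k..m-1. ee m j * real (j choose k))"
      unfolding T_def by (simp only:) (rule sum.union_disjoint, auto)
    also have "(\<Sum>j\<in>{0..<k}. ee m j * real (j choose k)) = 0"
      by (intro sum.neutral) (auto simp: binomial_eq_0)
    finally show ?thesis by (simp add: mult.commute)
  qed
  finally have TD: "T = D0" using GD by simp
  have fm: "fact m = fact n * real ((n + k) choose k) * fact k"
  proof -
    have h: "(fact k * fact n * ((n+k) choose k) :: nat) = fact (n+k)"
      using binomial_fact_lemma[of k "n+k"] by simp
    have "real (fact k * fact n * ((n+k) choose k)) = real (fact (n+k))" using h by simp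
    then show ?thesis unfolding m_def by (simp add: mult_ac)
  qed
  show ?thesis unfolding LHS RHS TD fm by (simp add: field_simps)
qed
end
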